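(* Let $\Gamma=(V,E)$ be a finite multigraph without loops, with arc set $A=A(\Gamma)$, and let $U=SC'$ be a flip-flop coined QW on $\mathcal{H}_A$ whose coin is $C'=\bigoplus_{v\in V}C_v$, where each $C_v=2\ket{\alpha^{(v)}}\bra{\alpha^{(v)}}-I_{\mathcal{H}_v}$ is a generalized Grover operator on $\mathcal{H}_v=\mathrm{span}\{\ket{a}:o(a)=v\}$ with $\ket{\alpha^{(v)}}\in\mathcal{H}_v$ a unit vector. Let $S(\Gamma)$ be the subdivision graph of $\Gamma$, viewed as the bipartite graph with parts $X=V$ and $Y=E$, and let $\mathcal{U}_\eta:\mathcal{H}_A\to\mathcal{H}_{E(S(\Gamma))}$ be the unitary defined by $\mathcal{U}_\eta\ket{a}=\ket{o(a)}\otimes\ket{\{a,\bar a\}}$. Then there is an extended Szegedy walk with evolution operator $W$ on $\mathcal{H}^{|V|}\otimes\mathcal{H}^{|E|}$ for the bipartite graph $S(\Gamma)$ such that $$U=\mathcal{U}_\eta^{-1}\,W|_{\mathcal{H}_{E(S(\Gamma))}}\,\mathcal{U}_\eta .$$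
   Context: Multigraph and arcs: each edge $e\in E$ is identified with a pair of opposite arcs $\{a,\bar a\}$; $A$ is the set of all such arcs, $o(a),t(a)\in V$ denote origin and terminal vertex of $a$, with $o(\bar a)=t(a)$, $t(\bar a)=o(a)$. $\mathcal{H}_A$ is the Hilbert space with orthonormal basis $\{\ket{a}:a\in A\}$ (equivalently the basis $\ket{v,j}$, $v\in V$, $0\le j<d_v$, one vector per vertex and incident edge-end). Flip-flop coined QW: $U=SC'$ with shift $S\ket{a}=\ket{\bar a}$ and coin $C'$ a direct sum of operators $C_v$ on the subspaces $\mathcal{H}_v=\mathrm{span}\{\ket{a}:o(a)=v\}$. A generalized Grover operator on $\mathcal{H}_v$ is $2\ket{\psi}\bra{\psi}-I_{\mathcal{H}_v}$ for a unit vector $\ket{\psi}\in\mathcal{H}_v$. Subdivision graph $S(\Gamma)$: vertex set $V\cup E$, edge set $\{\{v,e\}: v\in V, e\in E, v\in e\}$ (a new vertex is inserted in the middle of each edge); it is bipartite with parts $X=V$, $Y=E$, and $\mathcal{H}_{E(S(\Gamma))}$ denotes the subspace of $\mathcal{H}^{|V|}\otimes\mathcal{H}^{|E|}$ spanned by $\{\ket{v}\otimes\ket{e}: v\in e\}$. Extended Szegedy QW on a connected bipartite graph $(X,Y,E')$ with biadjacency matrix $M$: take right-stochastic $P=(p_{xy})_{x\in X,y\in Y}$ and $Q=(q_{yx})_{y\in Y,x\in X}$ with $M_{x,y}=0\Rightarrow p_{xy}=q_{yx}=0$, real phases $\theta_{xy},\theta'_{xy}$, vectors $\ket{\phi_x}=\sum_{y}\sqrt{p_{xy}}e^{i\theta_{xy}}\ket{x}\otimes\ket{y}$,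 $\ket{\psi_y}=\sum_x\sqrt{q_{yx}}e^{i\theta'_{xy}}\ket{x}\otimes\ket{y}$ in $\mathcal{H}^{|X|}\otimes\mathcal{H}^{|Y|}$, and $W=R_1R_0$ with $R_0=2\sum_x\ket{\phi_x}\bra{\phi_x}-I$, $R_1=2\sum_y\ket{\psi_y}\bra{\psi_y}-I$. *)

theory Defs
  imports Complex_Main
begin

definition loopless_multigraph :: "'v set \<Rightarrow> 'a set \<Rightarrow> ('a \<Rightarrow> 'a) \<Rightarrow> ('a \<Rightarrow> 'v) \<Rightarrow> bool" where
  "loopless_multigraph V A rv orig \<longleftrightarrow> finite V \<and> finite A \<and>
     (\<forall>a\<in>A. rv a \<in> A \<and> rv (rv a) = a \<and> rv a \<noteq> a \<and> orig a \<in> V \<and> orig (rv a) \<noteq> orig a)"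

definition edges :: "'a set \<Rightarrow> ('a \<Rightarrow> 'a) \<Rightarrow> 'a set set" where
  "edges A rv = {{a, rv a} | a. a \<in> A}"

definition arcs_at :: "'a set \<Rightarrow> ('a \<Rightarrow> 'v) \<Rightarrow> 'v \<Rightarrow> 'a set" where
  "arcs_at A orig v = {a \<in> A. orig a = v}"

text \<open>Vectors of H_A are functions A -> complex.  Coin C' = direct sum of generalized
  Grover operators 2|alpha^(v)><alpha^(v)| - I on H_v; alpha collects all alpha^(v).\<close>
definition grover_coin :: "'a set \<Rightarrow> ('a \<Rightarrow> 'v) \<Rightarrow> ('a \<Rightarrow> complex) \<Rightarrow> ('a \<Rightarrow> complex) \<Rightarrow> ('a \<Rightarrow> complex)" where
  "grover_coin A orig alpha f =
     (\<lambda>b. 2 * alpha b * (\<Sum>c\<in>arcs_at A orig (orig b). cnj (alpha c) * f c) - f b)"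

definition shift_op :: "('a \<Rightarrow> 'a) \<Rightarrow> ('a \<Rightarrow> complex) \<Rightarrow> ('a \<Rightarrow> complex)" where
  "shift_op rv f = (\<lambda>a. f (rv a))"

definition flipflop_U :: "'a set \<Rightarrow> ('a \<Rightarrow> 'a) \<Rightarrow> ('a \<Rightarrow> 'v) \<Rightarrow> ('a \<Rightarrow> complex) \<Rightarrow> ('a \<Rightarrow> complex) \<Rightarrow> ('a \<Rightarrow> complex)" where
  "flipflop_U A rv orig alpha f = shift_op rv (grover_coin A orig alpha f)"

text \<open>U_eta |a> = |o(a)> (x) |{a, rv a}>, as a map H_A -> H^|V| (x) H^|E| (functions on V x E).\<close>
definition U_eta :: "'a set \<Rightarrow> ('a \<Rightarrow> 'a) \<Rightarrow> ('a \<Rightarrow> 'v) \<Rightarrow> ('a \<Rightarrow> complex) \<Rightarrow> ('v \<times> 'a set \<Rightarrow> complex)" where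
  "U_eta A rv orig f = (\<lambda>(v, e). \<Sum>a\<in>{a \<in> A. orig a = v \<and> e = {a, rv a}}. f a)"

definition reflection :: "'i set \<Rightarrow> 'k set \<Rightarrow> ('k \<Rightarrow> 'i \<Rightarrow> complex) \<Rightarrow> ('i \<Rightarrow> complex) \<Rightarrow> ('i \<Rightarrow> complex)" where
  "reflection I K psi g = (\<lambda>i. 2 * (\<Sum>k\<in>K. psi k i * (\<Sum>j\<in>I. cnj (psi k j) * g j)) - g i)"

definition szegedy_phi :: "('x \<Rightarrow> 'y \<Rightarrow> real) \<Rightarrow> ('x \<Rightarrow> 'y \<Rightarrow> real) \<Rightarrow> 'x \<Rightarrow> ('x \<times> 'y \<Rightarrow> complex)" where
  "szegedy_phi P \<theta> x = (\<lambda>(x', y). if x' = x then complex_of_real (sqrt (P x y)) * cis (\<theta> x y) else 0)"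

definition szegedy_psi :: "('y \<Rightarrow> 'x \<Rightarrow> real) \<Rightarrow> ('x \<Rightarrow> 'y \<Rightarrow> real) \<Rightarrow> 'y \<Rightarrow> ('x \<times> 'y \<Rightarrow> complex)" where
  "szegedy_psi Q \<theta>' y = (\<lambda>(x, y'). if y' = y then complex_of_real (sqrt (Q y x)) * cis (\<theta>' x y) else 0)"

definition szegedy_W :: "'x set \<Rightarrow> 'y set \<Rightarrow> ('x \<Rightarrow> 'y \<Rightarrow> real) \<Rightarrow> ('y \<Rightarrow> 'x \<Rightarrow> real)
    \<Rightarrow> ('x \<Rightarrow> 'y \<Rightarrow> real) \<Rightarrow> ('x \<Rightarrow> 'y \<Rightarrow> real) \<Rightarrow> ('x \<times> 'y \<Rightarrow> complex) \<Rightarrow> ('x \<times> 'y \<Rightarrow> complex)" where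
  "szegedy_W X Y P Q \<theta> \<theta>' g =
     reflection (X \<times> Y) Y (szegedy_psi Q \<theta>') (reflection (X \<times> Y) X (szegedy_phi P \<theta>) g)"

definition szegedy_data :: "'x set \<Rightarrow> 'y set \<Rightarrow> ('x \<Rightarrow> 'y \<Rightarrow> bool) \<Rightarrow> ('x \<Rightarrow> 'y \<Rightarrow> real) \<Rightarrow> ('y \<Rightarrow> 'x \<Rightarrow> real) \<Rightarrow> bool" where
  "szegedy_data X Y M P Q \<longleftrightarrow>
     (\<forall>x\<in>X. \<forall>y\<in>Y. P x y \<ge> 0 \<and> Q y x \<ge> 0 \<and> (\<not> M x y \<longrightarrow> P x y = 0 \<and> Q y x = 0)) \<and>
     (\<forall>x\<in>X. (\<Sum>y\<in>Y. P x y) = 1) \<and> (\<forall>y\<in>Y. (\<Sum>x\<in>X. Q y x) = 1)"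

definition subdiv_adj :: "('a \<Rightarrow> 'v) \<Rightarrow> 'v \<Rightarrow> 'a set \<Rightarrow> bool" where
  "subdiv_adj orig v e \<longleftrightarrow> v \<in> orig ` e"

end

theory Submission
  imports Defs
begin

lemma mgD:
  assumes "loopless_multigraph V A rv orig" "a \<in> A"
  shows "rv a \<in> A" "rv (rv a) = a" "rv a \<noteq> a" "orig a \<in> V" "orig (rv a) \<noteq> orig a"
  using assms by (auto simp: loopless_multigraph_def)

lemma edge_set:
  assumes mg: "loopless_multigraph V A rv orig" and a0: "a0 \<in> A"
  shows "{a\<in>A. orig a = x \<and> {a0, rv a0} = {a, rv a}} =
    (if x = orig a0 then {a0} else if x = orig (rv a0) then {rv a0} else {})"
  using mgD[OF mg a0] a0 by (auto simp: doubleton_eq_iff)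

lemma U_eta_edge:
  assumes mg: "loopless_multigraph V A rv orig" and a0: "a0 \<in> A"
  shows "U_eta A rv orig k (x, {a0, rv a0}) =
    (if x = orig a0 then k a0 else if x = orig (rv a0) then k (rv a0) else 0)"
  unfolding U_eta_def using edge_set[OF mg a0, of x] by simp

lemma U_eta_out:
  assumes "x \<notin> orig ` e"
  shows "U_eta A rv orig k (x, e) = 0"
proof -
  have "{a\<in>A. orig a = x \<and> e = {a, rv a}} = {}" using assms by auto
  then show ?thesis unfolding U_eta_def by (simp only: split) simp
qed

lemma sum_single:
  assumes "finite S" "a \<in> S" "\<And>x. x \<in> S \<Longrightarrow> x \<noteq> a \<Longrightarrow> G x = 0"
  shows "sum G S = G a"
  using assms by (simp add: sum.remove)

lemma sum_fst:
  assumes "finite X" "finite Y" "x \<in> X" "\<And>j. j \<in> X \<times> Y \<Longrightarrow> fst j \<noteq> x \<Longrightarrow> G j = 0"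
  shows "(\<Sum>j\<in>X\<times>Y. G j) = (\<Sum>y\<in>Y. G (x, y))"
proof -
  have "(\<Sum>j\<in>X\<times>Y. G j) = (\<Sum>x'\<in>X. \<Sum>y\<in>Y. G (x', y))"
    by (simp add: sum.cartesian_product)
  also have "\<dots> = (\<Sum>y\<in>Y. G (x, y))"
    by (rule sum_single) (use assms in auto)
  finally show ?thesis .
qed

lemma sum_snd:
  assumes "finite X" "finite Y" "y \<in> Y" "\<And>j. j \<in> X \<times> Y \<Longrightarrow> snd j \<noteq> y \<Longrightarrow> G j = 0"
  shows "(\<Sum>j\<in>X\<times>Y. G j) = (\<Sum>x\<in>X. G (x, y))"
proof -
  have "(\<Sum>j\<in>X\<times>Y. G j) = (\<Sum>x\<in>X. \<Sum>y'\<in>Y. G (x, y'))"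
    by (simp add: sum.cartesian_product)
  also have "\<dots> = (\<Sum>x\<in>X. G (x, y))"
    by (rule sum.cong[OF refl], rule sum_single) (use assms in auto)
  finally show ?thesis .
qed

lemma finite_edges:
  assumes "loopless_multigraph V A rv orig"
  shows "finite (edges A rv)"
proof -
  have "edges A rv = (\<lambda>a. {a, rv a}) ` A" unfolding edges_def by auto
  then show ?thesis using assms by (simp add: loopless_multigraph_def)
qed

lemma sum_edges_at:
  assumes mg: "loopless_multigraph V A rv orig"
    and G0: "\<And>e. e \<in> edges A rv \<Longrightarrow> v \<notin> orig ` e \<Longrightarrow> G e = 0"
  shows "(\<Sum>e\<in>edges A rv. G e) = (\<Sum>a\<in>arcs_at A orig v. G {a, rv a})"
proof -
  let ?T = "(\<lambda>a. {a, rv a}) ` arcs_at A orig v"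
  have fA: "finite A" using mg by (simp add: loopless_multigraph_def)
  have sub: "?T \<subseteq> edges A rv" unfolding edges_def arcs_at_def by auto
  have "(\<Sum>e\<in>edges A rv. G e) = (\<Sum>e\<in>?T. G e)"
  proof (rule sum.mono_neutral_right[OF finite_edges[OF mg] sub])
    show "\<forall>e\<in>edges A rv - ?T. G e = 0"
    proof
      fix e assume e: "e \<in> edges A rv - ?T"
      then obtain a where a: "a \<in> A" "e = {a, rv a}" unfolding edges_def by auto
      have "v \<notin> orig ` e"
      proof
        assume "v \<in> orig ` e"
        then have "v = orig a \<or> v = orig (rv a)" using a by auto
        then show False
        proof
          assume "v = orig a"
          then have "e \<in> ?T" using a unfolding arcs_at_def by auto
          then show False using e by auto
        next
          assume "v = orig (rv a)"
          then have "rv a \<in> arcs_at A orig v" using mgD[OF mg a(1)] unfolding arcs_at_def by auto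
          moreover have "e = {rv a, rv (rv a)}" using a mgD[OF mg a(1)] by auto
          ultimately have "e \<in> ?T" by blast
          then show False using e by auto
        qed
      qed
      then show "G e = 0" using G0 e by auto
    qed
  qed
  also have "\<dots> = (\<Sum>a\<in>arcs_at A orig v. G {a, rv a})"
  proof (rule sum.reindex[unfolded comp_def])
    show "inj_on (\<lambda>a. {a, rv a}) (arcs_at A orig v)"
    proof (rule inj_onI)
      fix a b assume ab: "a \<in> arcs_at A orig v" "b \<in> arcs_at A orig v" "{a, rv a} = {b, rv b}"
      then have "a \<in> A" "b \<in> A" "orig a = v" "orig b = v" unfolding arcs_at_def by auto
      then show "a = b" using ab(3) mgD[OF mg \<open>a \<in> A\<close>] by (auto simp: doubleton_eq_iff)
    qed
  qed
  finally show ?thesis .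
qed


theorem theorem1:
  fixes V :: "'v set" and A :: "'a set" and rv :: "'a \<Rightarrow> 'a" and orig :: "'a \<Rightarrow> 'v"
    and alpha :: "'a \<Rightarrow> complex"
  assumes "loopless_multigraph V A rv orig"
    and "\<forall>v\<in>V. (\<Sum>a\<in>arcs_at A orig v. (cmod (alpha a))\<^sup>2) = 1"
  shows "\<exists>P Q \<theta> \<theta>'. szegedy_data V (edges A rv) (subdiv_adj orig) P Q \<and>
           (\<forall>f. \<forall>v\<in>V. \<forall>e\<in>edges A rv.
              szegedy_W V (edges A rv) P Q \<theta> \<theta>' (U_eta A rv orig f) (v, e)
                = U_eta A rv orig (flipflop_U A rv orig alpha f) (v, e))"
proof -
  note mg = assms(1)
  define E where "E = edges A rv"
  define \<beta> where "\<beta> v e = U_eta A rv orig alpha (v, e)" for v e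
  define P where "P v e = (cmod (\<beta> v e))\<^sup>2" for v e
  define \<theta> where "\<theta> v e = Arg (\<beta> v e)" for v e
  define Q where "Q e v = (if v \<in> orig ` e then 1/2 else 0 :: real)" for e v
  define \<theta>' where "\<theta>' = (\<lambda>(v::'v) (e::'a set). 0::real)"
  have fV: "finite V" and fA: "finite A" using mg by (auto simp: loopless_multigraph_def)
  have fE: "finite E" unfolding E_def by (rule finite_edges[OF mg])
  have Eobt: "\<exists>a0. a0 \<in> A \<and> e = {a0, rv a0}" if "e \<in> E" for e
    using that unfolding E_def edges_def by auto
  have \<beta>out: "\<beta> v e = 0" if "v \<notin> orig ` e" for v e
    unfolding \<beta>_def by (rule U_eta_out[OF that])
  have phi: "szegedy_phi P \<theta> x (y, e) = (if y = x then \<beta> y e else 0)" for x y e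
  proof -
    have "complex_of_real (sqrt (P y e)) * cis (\<theta> y e) = \<beta> y e"
      unfolding P_def \<theta>_def using rcis_cmod_Arg[of "\<beta> y e"] by (simp add: rcis_def)
    then show ?thesis unfolding szegedy_phi_def by auto
  qed
  have psi: "szegedy_psi Q \<theta>' e (y, e') = (if e' = e then complex_of_real (sqrt (Q e y)) else 0)" for e y e'
    unfolding szegedy_psi_def \<theta>'_def by simp
  have sumE: "(\<Sum>e\<in>E. G e) = (\<Sum>a\<in>arcs_at A orig v. G {a, rv a})"
    if "\<And>e. e \<in> E \<Longrightarrow> v \<notin> orig ` e \<Longrightarrow> G e = 0" for G v
    unfolding E_def by (rule sum_edges_at[OF mg]) (use that E_def in auto)
  have \<beta>arc: "\<beta> v {a, rv a} = alpha a" if "a \<in> arcs_at A orig v" for a v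
    using that U_eta_edge[OF mg, of a alpha v] unfolding \<beta>_def arcs_at_def by auto
  have data: "szegedy_data V E (subdiv_adj orig) P Q"
    unfolding szegedy_data_def
  proof (intro conjI ballI)
    fix x y assume "x \<in> V" "y \<in> E"
    show "P x y \<ge> 0" "Q y x \<ge> 0" unfolding P_def Q_def by auto
    show "\<not> subdiv_adj orig x y \<longrightarrow> P x y = 0 \<and> Q y x = 0"
      unfolding subdiv_adj_def P_def Q_def using \<beta>out by auto
  next
    fix x assume x: "x \<in> V"
    have "(\<Sum>y\<in>E. P x y) = (\<Sum>a\<in>arcs_at A orig x. P x {a, rv a})"
      by (rule sumE) (auto simp: P_def \<beta>out)
    also have "\<dots> = (\<Sum>a\<in>arcs_at A orig x. (cmod (alpha a))\<^sup>2)"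
      by (rule sum.cong) (auto simp: P_def \<beta>arc)
    finally show "(\<Sum>y\<in>E. P x y) = 1" using assms(2) x by simp
  next
    fix y assume "y \<in> E"
    then obtain a0 where a0: "a0 \<in> A" "y = {a0, rv a0}" using Eobt by blast
    note m = mgD[OF mg a0(1)]
    have "(\<Sum>x\<in>V. Q y x) = (\<Sum>x\<in>V \<inter> orig ` y. 1/2)"
      unfolding Q_def by (rule sum.inter_restrict[OF fV, symmetric])
    also have "V \<inter> orig ` y = {orig a0, orig (rv a0)}"
      using a0 m mgD[OF mg m(1)] by auto
    finally show "(\<Sum>x\<in>V. Q y x) = 1" using m by simp
  qed
  have main: "szegedy_W V E P Q \<theta> \<theta>' (U_eta A rv orig f) (v, e)
                = U_eta A rv orig (flipflop_U A rv orig alpha f) (v, e)"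
    if v: "v \<in> V" and e: "e \<in> E" for f v e
  proof -
    define g where "g = U_eta A rv orig f"
    define k where "k = grover_coin A orig alpha f"
    define s where "s x = (\<Sum>a\<in>arcs_at A orig x. cnj (alpha a) * f a)" for x
    define h where "h = reflection (V \<times> E) V (szegedy_phi P \<theta>) g"
    have hk: "h (x, e') = U_eta A rv orig k (x, e')" if x: "x \<in> V" and e': "e' \<in> E" for x e'
    proof -
      have inner: "(\<Sum>j\<in>V \<times> E. cnj (szegedy_phi P \<theta> x j) * g j) = s x"
      proof -
        have "(\<Sum>j\<in>V \<times> E. cnj (szegedy_phi P \<theta> x j) * g j) = (\<Sum>y\<in>E. cnj (\<beta> x y) * g (x, y))"
          by (rule trans[OF sum_fst[OF fV fE x]]) (auto simp: phi)
        also have "\<dots> = (\<Sum>a\<in>arcs_at A orig x. cnj (\<beta> x {a, rv a}) * g (x, {a, rv a}))"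
          by (rule sumE) (auto simp: \<beta>out)
        also have "\<dots> = s x" unfolding s_def
        proof (rule sum.cong[OF refl])
          fix a assume a: "a \<in> arcs_at A orig x"
          then have "a \<in> A" "orig a = x" unfolding arcs_at_def by auto
          then show "cnj (\<beta> x {a, rv a}) * g (x, {a, rv a}) = cnj (alpha a) * f a"
            using \<beta>arc[OF a] U_eta_edge[OF mg \<open>a \<in> A\<close>, of f x] unfolding g_def by simp
        qed
        finally show ?thesis .
      qed
      have "h (x, e') = 2 * (\<beta> x e' * s x) - g (x, e')"
        unfolding h_def reflection_def
        by (subst sum_single[OF fV x]) (auto simp: phi inner)
      also have "\<dots> = U_eta A rv orig k (x, e')"
      proof -
        obtain b where b: "b \<in> A" "e' = {b, rv b}" using Eobt[OF e'] by blast
        note m = mgD[OF mg b(1)]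
        show ?thesis
          unfolding g_def \<beta>_def b(2) U_eta_edge[OF mg b(1)] k_def grover_coin_def s_def
          using m by auto
      qed
      finally show ?thesis .
    qed
    obtain a0 where a0: "a0 \<in> A" "e = {a0, rv a0}" using Eobt[OF e] by blast
    note m = mgD[OF mg a0(1)]
    define c where "c x = complex_of_real (sqrt (Q e x))" for x
    have inner: "(\<Sum>j\<in>V \<times> E. cnj (szegedy_psi Q \<theta>' e j) * h j) = c (orig a0) * k a0 + c (orig (rv a0)) * k (rv a0)"
    proof -
      have "(\<Sum>j\<in>V \<times> E. cnj (szegedy_psi Q \<theta>' e j) * h j) = (\<Sum>x\<in>V. c x * h (x, e))"
        by (rule trans[OF sum_snd[OF fV fE e]]) (simp_all add: psi c_def split_paired_all)
      also have "\<dots> = (\<Sum>x\<in>V. (if x = orig a0 then c x * k a0 else 0) + (if x = orig (rv a0) then c x * k (rv a0) else 0))"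
        by (rule sum.cong[OF refl]) (use m e in \<open>auto simp: hk a0(2) U_eta_edge[OF mg a0(1)]\<close>)
      also have "\<dots> = c (orig a0) * k a0 + c (orig (rv a0)) * k (rv a0)"
        using m mgD[OF mg m(1)] fV by (simp add: sum.distrib)
      finally show ?thesis .
    qed
    have cval: "c (orig a0) = complex_of_real (sqrt (1/2))" "c (orig (rv a0)) = complex_of_real (sqrt (1/2))"
      unfolding c_def Q_def a0(2) by auto
    have cout: "c x = 0" if "x \<noteq> orig a0" "x \<noteq> orig (rv a0)" for x
      unfolding c_def Q_def a0(2) using that by auto
    have half: "2 * (complex_of_real (sqrt (1/2)) * complex_of_real (sqrt (1/2))) = 1"
      by (simp flip: of_real_mult)
    have "szegedy_W V E P Q \<theta> \<theta>' g (v, e) = 2 * (c v * (c (orig a0) * k a0 + c (orig (rv a0)) * k (rv a0))) - h (v, e)"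
    proof -
      have Weq: "szegedy_W V E P Q \<theta> \<theta>' g = reflection (V \<times> E) E (szegedy_psi Q \<theta>') h"
        unfolding szegedy_W_def h_def ..
      have "szegedy_W V E P Q \<theta> \<theta>' g (v, e) = 2 * (\<Sum>k\<in>E. szegedy_psi Q \<theta>' k (v, e) *
           (\<Sum>j\<in>V \<times> E. cnj (szegedy_psi Q \<theta>' k j) * h j)) - h (v, e)"
        unfolding Weq reflection_def by (rule refl)
      moreover have "(\<Sum>k\<in>E. szegedy_psi Q \<theta>' k (v, e) *
           (\<Sum>j\<in>V \<times> E. cnj (szegedy_psi Q \<theta>' k j) * h j))
          = szegedy_psi Q \<theta>' e (v, e) * (\<Sum>j\<in>V \<times> E. cnj (szegedy_psi Q \<theta>' e j) * h j)"
        by (rule sum_single[OF fE e]) (simp add: psi)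
      ultimately show ?thesis by (simp add: psi inner c_def)
    qed
    also have "\<dots> = U_eta A rv orig (flipflop_U A rv orig alpha f) (v, e)"
    proof -
      have hv: "h (v, e) = U_eta A rv orig k (v, e)" by (rule hk[OF v e])
      have "v = orig a0 \<or> v = orig (rv a0) \<or> (v \<noteq> orig a0 \<and> v \<noteq> orig (rv a0))" by blast
      then show ?thesis
      proof (elim disjE)
        assume vv: "v = orig a0"
        have "2 * (c v * (c (orig a0) * k a0 + c (orig (rv a0)) * k (rv a0))) = k a0 + k (rv a0)"
        proof -
          have "2 * (c v * (c (orig a0) * k a0 + c (orig (rv a0)) * k (rv a0)))
              = (2 * (complex_of_real (sqrt (1/2)) * complex_of_real (sqrt (1/2)))) * (k a0 + k (rv a0))"
            unfolding vv cval by (simp only: algebra_simps)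
          then show ?thesis unfolding half by simp
        qed
        then show ?thesis unfolding hv unfolding a0(2) U_eta_edge[OF mg a0(1)] flipflop_U_def shift_op_def k_def
          using vv m by simp
      next
        assume vv: "v = orig (rv a0)"
        have "2 * (c v * (c (orig a0) * k a0 + c (orig (rv a0)) * k (rv a0))) = k a0 + k (rv a0)"
        proof -
          have "2 * (c v * (c (orig a0) * k a0 + c (orig (rv a0)) * k (rv a0)))
              = (2 * (complex_of_real (sqrt (1/2)) * complex_of_real (sqrt (1/2)))) * (k a0 + k (rv a0))"
            unfolding vv cval by (simp only: algebra_simps)
          then show ?thesis unfolding half by simp
        qed
        then show ?thesis unfolding hv unfolding a0(2) U_eta_edge[OF mg a0(1)] flipflop_U_def shift_op_def k_def
          using vv m by simp
      next
        assume vv: "v \<noteq> orig a0 \<and> v \<noteq> orig (rv a0)"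
        then show ?thesis unfolding hv unfolding a0(2) U_eta_edge[OF mg a0(1)] using cout by simp
      qed
    qed
    finally show ?thesis unfolding g_def .
  qed
  show ?thesis
    by (rule exI[of _ P], rule exI[of _ Q], rule exI[of _ \<theta>], rule exI[of _ \<theta>'])
       (use data main in \<open>simp add: E_def\<close>)
qed

end
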